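(* Two irrationals $\alpha,\beta\in(1,2)$ are $\mathrm{PSL}(2,\mathbb Z)$-equivalent (i.e. $\beta=g\alpha$ for some $g\in\mathrm{PSL}(2,\mathbb Z)$ acting by Möbius transformations) if and only if there exist integers $r,s>0$ such that $t_r(\alpha)=t_s(\beta)$. Moreover, $\alpha$ is $\mathrm{PSL}(2,\mathbb Z)$-equivalent to each of its tails $t_m(\alpha)$.
   Context: The Lehner map on $[1,2)$ is $L(x)=\frac{1}{2-x}$ for $x\in[1,3/2)$ and $L(x)=\frac{1}{x-1}$ for $x\in[3/2,2)$. For irrational $x\in(1,2)$, its Lehner digits are $(a_i,\epsilon_i)=(2,-1)$ if $L^i(x)\in[1,3/2)$ and $(1,+1)$ if $L^i(x)\in[3/2,2)$, and $x=a_0+\cfrac{\epsilon_0}{a_1+\cfrac{\epsilon_1}{a_2+\cdots}}=[\![(a_0,\epsilon_0)(a_1,\epsilon_1)\cdots]\!]$. For $\alpha=[\![(a_0,\epsilon_0)(a_1,\epsilon_1)\cdots]\!]$ the $m$-tail is $t_m(\alpha)=(-\epsilon_0)(-\epsilon_1)\cdots(-\epsilon_m)\,[\![(a_{m+1},\epsilon_{m+1})(a_{m+2},\epsilon_{m+2})\cdots]\!]$, where $[\![\cdots]\!]$ denotes the value of the continued fraction with those digits. *)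

theory Defs
  imports Complex_Main
begin

definition lehner :: "real \<Rightarrow> real" where
  "lehner x = (if x < 3/2 then 1 / (2 - x) else 1 / (x - 1))"

definition lehner_digit :: "real \<Rightarrow> nat \<Rightarrow> int \<times> int" where
  "lehner_digit x i = (if (lehner ^^ i) x < 3/2 then (2, -1) else (1, 1))"

fun cf_fin :: "(nat \<Rightarrow> int \<times> int) \<Rightarrow> nat \<Rightarrow> nat \<Rightarrow> real" where
  "cf_fin d 0 k = of_int (fst (d k))"
| "cf_fin d (Suc n) k = of_int (fst (d k)) + of_int (snd (d k)) / cf_fin d n (Suc k)"

definition cf_val :: "(nat \<Rightarrow> int \<times> int) \<Rightarrow> real" where
  "cf_val d = lim (\<lambda>n. cf_fin d n 0)"

definition lehner_tail :: "nat \<Rightarrow> real \<Rightarrow> real" where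
  "lehner_tail m \<alpha> =
     (\<Prod>i\<le>m. - of_int (snd (lehner_digit \<alpha> i))) *
     cf_val (\<lambda>k. lehner_digit \<alpha> (m + 1 + k))"

definition psl2z_equiv :: "real \<Rightarrow> real \<Rightarrow> bool" where
  "psl2z_equiv \<alpha> \<beta> \<longleftrightarrow>
     (\<exists>a b c d :: int. a * d - b * c = 1 \<and>
        \<beta> = (of_int a * \<alpha> + of_int b) / (of_int c * \<alpha> + of_int d))"

end

theory Submission
  imports Defs
begin

definition Dg :: "int \<times> int \<Rightarrow> real \<Rightarrow> real" where
  "Dg p t = of_int (fst p) + of_int (snd p) / t"

fun compb :: "(nat \<Rightarrow> int \<times> int) \<Rightarrow> nat \<Rightarrow> real \<Rightarrow> real" where
  "compb d 0 t = t"
| "compb d (Suc n) t = compb d n (Dg (d n) t)"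

fun mats :: "(nat \<Rightarrow> int \<times> int) \<Rightarrow> nat \<Rightarrow> real \<times> real \<times> real \<times> real" where
  "mats d 0 = (1,0,0,1)"
| "mats d (Suc n) = (case mats d n of (P,Q,R,S) \<Rightarrow>
     if snd (d n) = -1 then (P+Q, Q, R+S, S) else (Q, P+Q, S, R+S))"

lemma compb_front: "compb e (Suc n) t = Dg (e 0) (compb (\<lambda>i. e (Suc i)) n t)"
  by (induction n arbitrary: t) auto

lemma cf_fin_compb: "cf_fin d n k = compb (\<lambda>i. d (k + i)) n (of_int (fst (d (k+n))))"
proof (induction n arbitrary: k)
  case 0 then show ?case by simp
next
  case (Suc n)
  have "compb (\<lambda>i. d (k+i)) (Suc n) (of_int (fst (d (k + Suc n)))) =
     Dg (d k) (compb (\<lambda>i. d (Suc k + i)) n (of_int (fst (d (Suc k + n)))))"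
    by (subst compb_front) simp
  then show ?case using Suc[of "Suc k"] by (simp add: Dg_def)
qed

lemma lehner_range: "1 \<le> z \<Longrightarrow> z \<le> 2 \<Longrightarrow> 1 \<le> lehner z \<and> lehner z \<le> 2"
  by (auto simp: lehner_def field_simps)

lemma lehner_pow_range: "1 \<le> z \<Longrightarrow> z \<le> 2 \<Longrightarrow> 1 \<le> (lehner^^n) z \<and> (lehner^^n) z \<le> 2"
  by (induction n) (auto dest: lehner_range)

lemma Dg_lehner: "1 \<le> w \<Longrightarrow> w \<le> 2 \<Longrightarrow> Dg (if w < 3/2 then (2,-1) else (1,1)) (lehner w) = w"
  by (auto simp: Dg_def lehner_def)

lemma z_compb: "1 \<le> z \<Longrightarrow> z \<le> 2 \<Longrightarrow> compb (lehner_digit z) n ((lehner^^n) z) = z"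
proof (induction n)
  case 0 then show ?case by simp
next
  case (Suc n)
  have "Dg (lehner_digit z n) ((lehner^^Suc n) z) = (lehner^^n) z"
    using Dg_lehner[of "(lehner^^n) z"] lehner_pow_range[OF Suc.prems, of n]
    by (simp add: lehner_digit_def)
  then show ?case using Suc by simp
qed

lemma mats_inv: "(\<forall>k. snd (d k) = -1 \<or> snd (d k) = 1) \<Longrightarrow> mats d n = (P,Q,R,S) \<Longrightarrow>
   R \<ge> 0 \<and> S \<ge> 1 \<and> R + S \<ge> real n + 1 \<and> \<bar>P*S - Q*R\<bar> = 1"
proof (induction n arbitrary: P Q R S)
  case 0 then show ?case by simp
next
  case (Suc n)
  obtain P0 Q0 R0 S0 where m: "mats d n = (P0,Q0,R0,S0)" by (cases "mats d n") auto
  note IH = Suc.IH[OF Suc.prems(1) m]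
  show ?case
  proof (cases "snd (d n) = -1")
    case True
    then have "P = P0+Q0" "Q = Q0" "R = R0+S0" "S = S0" using Suc.prems(2) m by auto
    then show ?thesis using IH by (auto simp: algebra_simps)
  next
    case False
    then have "P = Q0" "Q = P0+Q0" "R = S0" "S = R0+S0" using Suc.prems(2) m by auto
    then show ?thesis using IH by (auto simp: algebra_simps abs_minus_commute)
  qed
qed

lemma divdiv: "c \<noteq> 0 \<Longrightarrow> (X/c)/(Y/c) = X/(Y::real)"
  by (cases "Y=0") (auto simp: field_simps)

lemma mats_formula: "(\<forall>k. d k = (2,-1) \<or> d k = (1,1)) \<Longrightarrow> mats d n = (P,Q,R,S) \<Longrightarrow>
   0 \<le> u \<Longrightarrow> u \<le> 1 \<Longrightarrow> compb d n (1 + u) = 1 + (P*u+Q)/(R*u+S)"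
proof (induction n arbitrary: P Q R S u)
  case 0 then show ?case by simp
next
  case (Suc n)
  obtain P0 Q0 R0 S0 where m: "mats d n = (P0,Q0,R0,S0)" by (cases "mats d n") auto
  have h: "\<forall>k. snd (d k) = -1 \<or> snd (d k) = 1" using Suc.prems(1) by (metis snd_conv)
  have inv: "R0 \<ge> 0" "S0 \<ge> 1" using mats_inv[OF h m] by auto
  show ?case
  proof (cases "d n = (2,-1)")
    case True
    then have e: "P = P0+Q0" "Q = Q0" "R = R0+S0" "S = S0" using Suc.prems(2) m by auto
    have u': "0 \<le> u/(1+u)" "u/(1+u) \<le> 1" using Suc.prems by auto
    have "Dg (d n) (1+u) = 1 + u/(1+u)" using True Suc.prems by (simp add: Dg_def field_simps)
    then have "compb d (Suc n) (1+u) = 1 + (P0*(u/(1+u))+Q0)/(R0*(u/(1+u))+S0)"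
      using Suc.IH[OF Suc.prems(1) m u'] by simp
    also have "\<dots> = 1 + (((P0+Q0)*u + Q0)/(1+u))/(((R0+S0)*u + S0)/(1+u))"
      using Suc.prems by (simp add: field_simps)
    also have "\<dots> = 1 + (P*u+Q)/(R*u+S)" using e Suc.prems divdiv[of "1+u"] by simp
    finally show ?thesis .
  next
    case False
    then have dn: "d n = (1,1)" using Suc.prems(1) by metis
    then have e: "P = Q0" "Q = P0+Q0" "R = S0" "S = R0+S0" using Suc.prems(2) m by auto
    have u': "0 \<le> 1/(1+u)" "1/(1+u) \<le> 1" using Suc.prems by auto
    have "Dg (d n) (1+u) = 1 + 1/(1+u)" using dn Suc.prems by (simp add: Dg_def field_simps)
    then have "compb d (Suc n) (1+u) = 1 + (P0*(1/(1+u))+Q0)/(R0*(1/(1+u))+S0)"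
      using Suc.IH[OF Suc.prems(1) m u'] by simp
    also have "\<dots> = 1 + ((Q0*u + (P0+Q0))/(1+u))/((S0*u + (R0+S0))/(1+u))"
      using Suc.prems by (simp add: field_simps)
    also have "\<dots> = 1 + (P*u+Q)/(R*u+S)" using e Suc.prems divdiv[of "1+u"] by simp
    finally show ?thesis .
  qed
qed

lemma moeb_bound:
  fixes P Q R S u1 u2 :: real
  assumes "R \<ge> 0" "S \<ge> 1" "\<bar>P*S - Q*R\<bar> = 1" "0 \<le> u1" "u1 \<le> 1" "0 \<le> u2" "u2 \<le> 1"
  shows "\<bar>(P*u1+Q)/(R*u1+S) - (P*u2+Q)/(R*u2+S)\<bar> \<le> 1/(R+S)"
proof -
  define X1 where "X1 = R*u1+S"
  define X2 where "X2 = R*u2+S"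
  have X1: "X1 \<ge> S" and X2: "X2 \<ge> S" using assms by (auto simp: X1_def X2_def)
  have nz: "X1 \<noteq> 0" "X2 \<noteq> 0" using X1 X2 assms by auto
  have num: "(P*u1+Q)*X2 - (P*u2+Q)*X1 = (P*S - Q*R)*(u1-u2)"
    by (simp add: X1_def X2_def algebra_simps)
  have "(P*u1+Q)/X1 - (P*u2+Q)/X2 = (P*S - Q*R)*(u1-u2)/(X1*X2)"
    using nz by (simp add: diff_frac_eq num)
  then have e: "\<bar>(P*u1+Q)/X1 - (P*u2+Q)/X2\<bar> = \<bar>u1-u2\<bar>/(X1*X2)"
    using assms X1 X2 by (simp add: abs_mult)
  have key: "\<bar>u1-u2\<bar> * (R+S) \<le> X1*X2"
  proof -
    have sym: "\<And>a b Y1 Y2. 0 \<le> a \<Longrightarrow> a \<le> b \<Longrightarrow> b \<le> 1 \<Longrightarrow> Y1 \<ge> S \<Longrightarrow> Y2 = R*b+S \<Longrightarrow>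
        (b - a)*(R+S) \<le> Y1*Y2"
    proof -
      fix a b Y1 Y2 :: real
      assume h: "0 \<le> a" "a \<le> b" "b \<le> 1" "Y1 \<ge> S" "Y2 = R*b+S"
      have "(b-a)*(R+S) \<le> b*(R+S)" using h assms by (intro mult_right_mono) auto
      also have "\<dots> \<le> R*b + S" using h assms by (simp add: algebra_simps mult_left_le_one_le)
      also have "\<dots> \<le> S * Y2"
      proof -
        have "Y2 \<ge> 0" using h assms by (simp add: add_nonneg_nonneg)
        then show ?thesis using h assms mult_right_mono[of 1 S Y2] by simp
      qed
      also have "\<dots> \<le> Y1*Y2" using h assms by (intro mult_right_mono) auto
      finally show "(b - a)*(R+S) \<le> Y1*Y2" .
    qed
    show ?thesis
    proof (cases "u1 \<le> u2")
      case True then show ?thesis using sym[of u1 u2 X1 X2] assms X1 by (simp add: X2_def)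
    next
      case False then show ?thesis using sym[of u2 u1 X2 X1] assms X2 by (simp add: X1_def mult.commute)
    qed
  qed
  have "\<bar>u1-u2\<bar>/(X1*X2) \<le> 1/(R+S)"
    using key X1 X2 assms by (simp add: divide_simps)
  then show ?thesis using e by (simp add: X1_def X2_def)
qed

lemma cf_val_lehner:
  assumes "1 \<le> z" "z \<le> 2"
  shows "cf_val (lehner_digit z) = z"
proof -
  define d where "d = lehner_digit z"
  have dform: "\<forall>k. d k = (2,-1) \<or> d k = (1,1)" by (simp add: d_def lehner_digit_def)
  have h: "\<forall>k. snd (d k) = -1 \<or> snd (d k) = 1" using dform by (metis snd_conv)
  have bnd: "\<bar>cf_fin d n 0 - z\<bar> \<le> inverse (real (Suc n))" for n
  proof -
    obtain P Q R S where m: "mats d n = (P,Q,R,S)" by (cases "mats d n") auto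
    note inv = mats_inv[OF h m]
    define u1 where "u1 = of_int (fst (d n)) - (1::real)"
    have u1: "0 \<le> u1" "u1 \<le> 1" using dform[rule_format, of n] by (auto simp: u1_def)
    define u2 where "u2 = (lehner^^n) z - 1"
    have u2: "0 \<le> u2" "u2 \<le> 1" using lehner_pow_range[OF assms, of n] by (auto simp: u2_def)
    have c1: "cf_fin d n 0 = 1 + (P*u1+Q)/(R*u1+S)"
      using cf_fin_compb[of d n 0] mats_formula[OF dform m u1] by (simp add: u1_def)
    have c2: "z = 1 + (P*u2+Q)/(R*u2+S)"
      using z_compb[OF assms, of n] mats_formula[OF dform m u2] by (simp add: u2_def d_def)
    have "\<bar>cf_fin d n 0 - z\<bar> \<le> 1/(R+S)"
      using moeb_bound[of R S P Q u1 u2] inv u1 u2 c1 c2 by simp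
    also have "\<dots> \<le> inverse (real (Suc n))" using inv
      by (simp add: divide_simps inverse_eq_divide)
    finally show ?thesis .
  qed
  have "(\<lambda>n. cf_fin d n 0) \<longlonglongrightarrow> z"
  proof (rule tendsto_sandwich[of "\<lambda>n. z - inverse (real (Suc n))" _ _ "\<lambda>n. z + inverse (real (Suc n))"])
    show "\<forall>\<^sub>F n in sequentially. z - inverse (real (Suc n)) \<le> cf_fin d n 0"
      by (intro always_eventually allI) (use bnd in \<open>smt (verit) abs_le_iff\<close>)
    show "\<forall>\<^sub>F n in sequentially. cf_fin d n 0 \<le> z + inverse (real (Suc n))"
      by (intro always_eventually allI) (use bnd in \<open>smt (verit) abs_le_iff\<close>)
    show "(\<lambda>n. z - inverse (real (Suc n))) \<longlonglongrightarrow> z"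
      using tendsto_diff[OF tendsto_const LIMSEQ_inverse_real_of_nat, of z] by simp
    show "(\<lambda>n. z + inverse (real (Suc n))) \<longlonglongrightarrow> z"
      using tendsto_add[OF tendsto_const LIMSEQ_inverse_real_of_nat, of z] by simp
  qed
  then show ?thesis by (simp add: cf_val_def limI d_def)
qed


definition NN :: "real \<Rightarrow> real" where "NN x = x - of_int \<lfloor>x\<rfloor> + 1"
definition sg :: "real \<Rightarrow> nat \<Rightarrow> real" where
  "sg z n = (\<Prod>i<n. - of_int (snd (lehner_digit z i)))"
definition Rel :: "real \<Rightarrow> real \<Rightarrow> bool" where
  "Rel x y \<longleftrightarrow> (\<exists>r s. (lehner^^r) (NN x) = (lehner^^s) (NN y) \<and> sg (NN x) r = sg (NN y) s)"

lemma digit_shift: "lehner_digit z (i + r) = lehner_digit ((lehner^^r) z) i"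
  by (simp add: lehner_digit_def funpow_add)

lemma sg_add: "sg z (r + p) = sg z r * sg ((lehner^^r) z) p"
proof (induction p)
  case 0 then show ?case by (simp add: sg_def)
next
  case (Suc p)
  have "sg z (r + Suc p) = sg z (r + p) * (- of_int (snd (lehner_digit z (r+p))))"
    by (simp add: sg_def)
  also have "\<dots> = sg z r * sg ((lehner^^r) z) (Suc p)"
    using Suc digit_shift[of z p r] by (simp add: sg_def add.commute)
  finally show ?case .
qed

lemma sg_one: "sg z 1 = (if z < 3/2 then 1 else -1)"
  by (simp add: sg_def lehner_digit_def)

lemma sg_Suc: "sg z (Suc n) = sg z 1 * sg (lehner z) n"
  using sg_add[of z 1 n] by simp

lemma funpow_comm: "(lehner^^p) ((lehner^^s) b) = (lehner^^s) ((lehner^^p) b)"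
  by (metis funpow_add comp_apply add.commute)

lemma Rel_refl: "Rel x x"
  unfolding Rel_def by (rule exI[of _ 0], rule exI[of _ 0]) simp

lemma Rel_sym: "Rel x y \<Longrightarrow> Rel y x"
  unfolding Rel_def by metis

lemma Rel_trans: assumes "Rel x y" "Rel y w" shows "Rel x w"
proof -
  define a where "a = NN x"
  define b where "b = NN y"
  define c where "c = NN w"
  obtain r s where 1: "(lehner^^r) a = (lehner^^s) b" "sg a r = sg b s"
    using assms(1) by (auto simp: Rel_def a_def b_def)
  obtain p q where 2: "(lehner^^p) b = (lehner^^q) c" "sg b p = sg c q"
    using assms(2) by (auto simp: Rel_def b_def c_def)
  have e: "(lehner^^(r+p)) a = (lehner^^(q+s)) c"
    by (metis 1(1) 2(1) funpow_add comp_apply funpow_comm)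
  have "sg a (r+p) = sg a r * sg ((lehner^^r) a) p" by (rule sg_add)
  also have "\<dots> = sg b s * sg ((lehner^^s) b) p" using 1 by simp
  also have "\<dots> = sg b (s+p)" by (rule sg_add[symmetric])
  also have "\<dots> = sg b (p+s)" by (simp add: add.commute)
  also have "\<dots> = sg b p * sg ((lehner^^p) b) s" by (rule sg_add)
  also have "\<dots> = sg c q * sg ((lehner^^q) c) s" using 2 by simp
  also have "\<dots> = sg c (q+s)" by (rule sg_add[symmetric])
  finally show ?thesis unfolding Rel_def using e a_def c_def by blast
qed

lemma NN_shift: "NN (x + of_int n) = NN x"
  by (simp add: NN_def)

lemma Rel_T: "Rel x (x + of_int n)"
  unfolding Rel_def NN_shift by (rule exI[of _ 0], rule exI[of _ 0]) simp

lemma lem1: "1 < z \<Longrightarrow> z < 2 \<Longrightarrow>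
  (lehner^^(Suc j)) (1 + 1/(z + real j)) = z \<and> sg (1 + 1/(z + real j)) (Suc j) = -1"
proof (induction j)
  case 0
  have "\<not> (1 + 1/z < 3/2)" using 0 by (simp add: field_simps)
  then show ?case using 0 by (simp add: lehner_def sg_def lehner_digit_def)
next
  case (Suc j)
  define w where "w = 1 + 1/(z + real (Suc j))"
  have lt: "w < 3/2" using Suc.prems by (simp add: w_def field_simps)
  have lw: "lehner w = 1 + 1/(z + real j)" using lt Suc.prems
    by (simp add: lehner_def w_def field_simps)
  have "(lehner^^(Suc (Suc j))) w = (lehner^^(Suc j)) (lehner w)"
    by (simp only: funpow_Suc_right comp_apply)
  moreover have "sg w (Suc (Suc j)) = sg w 1 * sg (lehner w) (Suc j)" by (rule sg_Suc)
  ultimately show ?case using Suc lw lt sg_one[of w] by (simp add: w_def)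
qed

lemma lem2: "1 < z \<Longrightarrow> z < 2 \<Longrightarrow>
  (lehner^^(Suc k)) (2 - 1/(z + real k)) = z \<and> sg (2 - 1/(z + real k)) (Suc k) = 1"
proof (cases k)
  case 0
  assume z: "1 < z" "z < 2"
  have "2 - 1/z < 3/2" using z by (simp add: field_simps)
  then show ?thesis using 0 z by (simp add: lehner_def sg_def lehner_digit_def)
next
  case (Suc j)
  assume z: "1 < z" "z < 2"
  define w where "w = 2 - 1/(z + real (Suc j))"
  have ge: "\<not> w < 3/2" using z by (simp add: w_def field_simps)
  have lw: "lehner w = 1 + 1/(z + real j)" using ge z
    by (simp add: lehner_def w_def field_simps)
  have "(lehner^^(Suc (Suc j))) w = (lehner^^(Suc j)) (lehner w)"
    by (simp only: funpow_Suc_right comp_apply)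
  moreover have "sg w (Suc (Suc j)) = sg w 1 * sg (lehner w) (Suc j)" by (rule sg_Suc)
  ultimately show ?thesis using lem1[OF z, of j] lw ge sg_one[of w] Suc by (simp add: w_def)
qed


lemma irr_inv: "(x::real) \<notin> \<rat> \<Longrightarrow> 1/x \<notin> \<rat>"
  by (metis Rats_1 Rats_divide divide_divide_eq_right div_by_1 mult_1 divide_self_if
        nonzero_divide_eq_eq one_divide_eq_0_iff zero_neq_one Rats_0)

lemma irr_add_int: "(x::real) \<notin> \<rat> \<Longrightarrow> x + of_int n \<notin> \<rat>"
  by (metis Rats_diff Rats_of_int add_diff_cancel_right')

lemma irr_neg: "(x::real) \<notin> \<rat> \<Longrightarrow> -x \<notin> \<rat>"
  by (metis Rats_minus_iff)

lemma NN_id: "1 \<le> z \<Longrightarrow> z < 2 \<Longrightarrow> NN z = z"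
proof -
  assume "1 \<le> z" "z < 2"
  then have "\<lfloor>z\<rfloor> = 1" by (simp add: floor_eq_iff)
  then show ?thesis by (simp add: NN_def)
qed

lemma split_gt1:
  assumes "(w::real) > 1" "w \<notin> \<rat>"
  obtains j g where "0 < g" "g < 1" "g \<notin> \<rat>" "w = (1+g) + real j"
proof -
  define a where "a = \<lfloor>w\<rfloor>"
  define g where "g = w - of_int a"
  have a1: "a \<ge> 1" using assms by (simp add: a_def)
  have gi: "g \<notin> \<rat>" using irr_add_int[OF assms(2), of "-a"] by (simp add: g_def)
  have "g \<ge> 0" "g < 1" using a_def g_def by linarith+
  moreover have "g \<noteq> 0" using gi by auto
  ultimately have "0 < g" "g < 1" by auto
  moreover have "w = (1+g) + real (nat (a-1))" using a1 by (simp add: g_def)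
  ultimately show ?thesis using that gi by blast
qed

lemma Rel_S_pos:
  assumes x: "x \<notin> \<rat>" "x > 0"
  shows "Rel x (-1/x)"
proof (cases "x > 1")
  case True
  obtain k g where g: "0 < g" "g < 1" "g \<notin> \<rat>" "x = (1+g) + real k"
    using split_gt1[OF True x(1)] by blast
  have n1: "NN x = 1+g" using NN_shift[of "1+g" "int k"] NN_id[of "1+g"] g by simp
  have "NN (-1/x) = NN ((2 - 1/x) + of_int (-2))" by simp
  also have "\<dots> = NN (2 - 1/x)" by (rule NN_shift)
  also have "\<dots> = 2 - 1/x"
  proof (rule NN_id)
    show "1 \<le> 2 - 1/x" using True by (simp add: field_simps)
    show "2 - 1/x < 2" using True by simp
  qed
  finally have n2: "NN (-1/x) = 2 - 1/(1+g + real k)" using g by simp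
  have "(lehner^^0) (NN x) = (lehner^^(Suc k)) (NN (-1/x)) \<and> sg (NN x) 0 = sg (NN (-1/x)) (Suc k)"
    using lem2[of "1+g" k] g n1 n2 by (simp add: sg_def)
  then show ?thesis unfolding Rel_def by blast
next
  case False
  then have x1: "x < 1" using x by (cases "x = 1") auto
  define u where "u = 1/x"
  have u: "u > 1" "u \<notin> \<rat>" using x x1 irr_inv[OF x(1)] by (auto simp: u_def field_simps)
  obtain j f where f: "0 < f" "f < 1" "f \<notin> \<rat>" "u = (1+f) + real j"
    using split_gt1[OF u] by blast
  have v: "1/f > 1" "1/f \<notin> \<rat>" using f irr_inv[OF f(3)] by (auto simp: field_simps)
  obtain j' g where g: "0 < g" "g < 1" "g \<notin> \<rat>" "1/f = (1+g) + real j'"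
    using split_gt1[OF v] by blast
  have ff: "f = 1/((1+g) + real j')" using g(4) f by (metis divide_divide_eq_right div_by_1 mult_1)
  have n1: "NN x = 1 + 1/((1+f) + real j)"
  proof -
    have "NN x = NN ((1+x) + of_int (-1))" by simp
    also have "\<dots> = NN (1+x)" by (rule NN_shift)
    also have "\<dots> = 1 + x" using NN_id[of "1+x"] x x1 by simp
    moreover have "x = 1/u" using u_def x by simp
    ultimately show ?thesis using f(4) by simp
  qed
  have n2: "NN (-1/x) = 2 - 1/((1+g) + real j')"
  proof -
    have "-1/x = (2 - f) + of_int (- (int j + 3))" using f(4) u_def by (simp add: field_simps)
    then have "NN (-1/x) = NN (2 - f)" using NN_shift[of "2-f" "- (int j + 3)"] by (simp only:)
    also have "\<dots> = 2 - f" using NN_id[of "2-f"] f by simp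
    finally show ?thesis using ff by simp
  qed
  have A1: "(lehner^^(Suc j)) (NN x) = 1 + f" "sg (NN x) (Suc j) = -1"
    using lem1[of "1+f" j] f n1 by auto
  have A2: "(lehner^^(Suc j')) (1 + f) = 1 + g" "sg (1+f) (Suc j') = -1"
    using lem1[of "1+g" j'] g ff by auto
  have A3: "(lehner^^(Suc j')) (NN (-1/x)) = 1 + g" "sg (NN (-1/x)) (Suc j') = 1"
    using lem2[of "1+g" j'] g n2 by auto
  have "(lehner^^(Suc j + Suc j')) (NN x) = 1 + g"
    using A1 A2 by (metis funpow_add comp_apply add.commute)
  moreover have "sg (NN x) (Suc j + Suc j') = 1"
    using sg_add[of "NN x" "Suc j" "Suc j'"] A1 A2 by simp
  ultimately show ?thesis unfolding Rel_def using A3 by metis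
qed

lemma Rel_S:
  assumes x: "x \<notin> \<rat>"
  shows "Rel x (-1/x)"
proof (cases "x > 0")
  case True then show ?thesis using Rel_S_pos x by blast
next
  case False
  then have "x < 0" using x by (cases "x = 0") auto
  then have p: "-1/x > 0" by simp
  have "-1/x \<notin> \<rat>" using irr_neg[OF irr_inv[OF x]] by simp
  then have "Rel (-1/x) (-1/(-1/x))" using Rel_S_pos p by blast
  then show ?thesis using Rel_sym by simp
qed


lemma int_prod1: "(a::int) * d = 1 \<Longrightarrow> (a = 1 \<and> d = 1) \<or> (a = -1 \<and> d = -1)"
  by (metis zmult_eq_1_iff)

lemma Rel_mat:
  "nat \<bar>c\<bar> = n \<Longrightarrow> a*d - b*c = 1 \<Longrightarrow> x \<notin> \<rat> \<Longrightarrow>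
   Rel x ((of_int a * x + of_int b)/(of_int c * x + of_int d)) \<and>
   (of_int a * x + of_int b)/(of_int c * x + of_int d) \<notin> \<rat>"
proof (induction n arbitrary: a b c d rule: less_induct)
  case (less n)
  show ?case
  proof (cases "c = 0")
    case True
    then have "a*d = 1" using less.prems by simp
    then have "(a = 1 \<and> d = 1) \<or> (a = -1 \<and> d = -1)" by (rule int_prod1)
    then have e: "(of_int a * x + of_int b)/(of_int c * x + of_int d) = x + of_int (b*d)"
      using True by (auto simp: field_simps)
    show ?thesis unfolding e using Rel_T irr_add_int less.prems by blast
  next
    case False
    define q where "q = a div c"
    define r where "r = a mod c"
    have aqr: "a = q*c + r" by (simp add: q_def r_def)
    have rl: "\<bar>r\<bar> < \<bar>c\<bar>" using False by (simp add: r_def abs_mod_less)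
    have det: "c*(q*d - b) - d*(-r) = 1" using less.prems(2) aqr by (simp add: algebra_simps)
    define y where "y = (of_int c * x + of_int d)/(of_int (-r) * x + of_int (q*d - b))"
    have lt: "nat \<bar>-r\<bar> < n" using rl less.prems(1) by simp
    have IH: "Rel x y \<and> y \<notin> \<rat>"
      using less.IH[OF lt refl det less.prems(3)] unfolding y_def .
    have den: "of_int c * x + of_int d \<noteq> 0"
    proof
      assume "of_int c * x + of_int d = 0"
      then have "x = - of_int d / of_int c" using False by (simp add: field_simps)
      then show False using less.prems(3) by simp
    qed
    have ny: "-1/y = - (of_int (-r) * x + of_int (q*d - b)) / (of_int c * x + of_int d)"
      by (simp add: y_def)
    have e: "(of_int a * x + of_int b)/(of_int c * x + of_int d) = -1/y + of_int q"
      unfolding ny using den aqr by (simp add: field_simps)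
    have i2: "-1/y \<notin> \<rat>" using irr_neg[OF irr_inv] IH by simp
    have "Rel x (-1/y)" using Rel_trans IH Rel_S by blast
    then have "Rel x (-1/y + of_int q)" using Rel_trans Rel_T by blast
    then show ?thesis unfolding e using irr_add_int[OF i2] by blast
  qed
qed

lemma psl_trans:
  assumes x: "(x::real) \<notin> \<rat>" and "psl2z_equiv x y" "psl2z_equiv y z"
  shows "psl2z_equiv x z"
proof -
  obtain a b c d :: int where 1: "a*d - b*c = 1" "y = (of_int a * x + of_int b)/(of_int c * x + of_int d)"
    using assms(2) by (auto simp: psl2z_equiv_def)
  obtain a' b' c' d' :: int where 2: "a'*d' - b'*c' = 1" "z = (of_int a' * y + of_int b')/(of_int c' * y + of_int d')"
    using assms(3) by (auto simp: psl2z_equiv_def)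
  have den: "of_int c * x + of_int d \<noteq> (0::real)"
  proof
    assume h: "of_int c * x + of_int d = (0::real)"
    show False
    proof (cases "c = 0")
      case True then show False using h 1 by simp
    next
      case False
      then have "x = - of_int d / of_int c" using h by (simp add: field_simps)
      then show False using x by simp
    qed
  qed
  define D where "D = of_int c * x + (of_int d::real)"
  have Dnz: "D \<noteq> 0" using den D_def by simp
  have yD: "y = (of_int a * x + of_int b) / D" using 1 D_def by simp
  have num: "of_int a' * y + of_int b' = (of_int (a'*a + b'*c) * x + of_int (a'*b + b'*d)) / D"
  proof -
    have "of_int a' * y + of_int b' = (of_int a' * (of_int a * x + of_int b) + of_int b' * D) / D"
      by (simp only: yD) (simp add: Dnz field_simps)
    also have "of_int a' * (of_int a * x + of_int b) + of_int b' * D = of_int (a'*a + b'*c) * x + of_int (a'*b + b'*d)"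
      by (simp add: D_def algebra_simps)
    finally show ?thesis .
  qed
  have dd: "of_int c' * y + of_int d' = (of_int (c'*a + d'*c) * x + of_int (c'*b + d'*d)) / D"
  proof -
    have "of_int c' * y + of_int d' = (of_int c' * (of_int a * x + of_int b) + of_int d' * D) / D"
      by (simp only: yD) (simp add: Dnz field_simps)
    also have "of_int c' * (of_int a * x + of_int b) + of_int d' * D = of_int (c'*a + d'*c) * x + of_int (c'*b + d'*d)"
      by (simp add: D_def algebra_simps)
    finally show ?thesis .
  qed
  have "z = (of_int (a'*a + b'*c) * x + of_int (a'*b + b'*d)) / (of_int (c'*a + d'*c) * x + of_int (c'*b + d'*d))"
    using 2 num dd divdiv[of D] den by (simp add: D_def)
  moreover have "(a'*a + b'*c)*(c'*b + d'*d) - (a'*b + b'*d)*(c'*a + d'*c) = 1"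
  proof -
    have "(a'*a + b'*c)*(c'*b + d'*d) - (a'*b + b'*d)*(c'*a + d'*c) = (a'*d' - b'*c')*(a*d - b*c)"
      by (simp add: algebra_simps)
    then show ?thesis using 1 2 by simp
  qed
  ultimately show ?thesis unfolding psl2z_equiv_def by blast
qed

lemma psl_sym:
  assumes x: "(x::real) \<notin> \<rat>" and "psl2z_equiv x y"
  shows "psl2z_equiv y x"
proof -
  obtain a b c d :: int where 1: "a*d - b*c = 1" "y = (of_int a * x + of_int b)/(of_int c * x + of_int d)"
    using assms(2) by (auto simp: psl2z_equiv_def)
  have den: "of_int c * x + of_int d \<noteq> (0::real)"
  proof
    assume h: "of_int c * x + of_int d = (0::real)"
    show False
    proof (cases "c = 0")
      case True then show False using h 1 by simp
    next
      case False
      then have "x = - of_int d / of_int c" using h by (simp add: field_simps)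
      then show False using x by simp
    qed
  qed
  have dr: "real_of_int a * real_of_int d - real_of_int b * real_of_int c = 1"
    using 1(1) by (metis of_int_1 of_int_diff of_int_mult)
  define D where "D = of_int c * x + (of_int d::real)"
  have Dnz: "D \<noteq> 0" using den D_def by simp
  have yD: "y = (of_int a * x + of_int b) / D" using 1 D_def by simp
  have n: "of_int d * y - of_int b = x / D"
  proof -
    have "of_int d * y - of_int b = (of_int d * (of_int a * x + of_int b) - of_int b * D) / D"
      by (simp only: yD) (simp add: Dnz field_simps)
    also have "of_int d * (of_int a * x + of_int b) - of_int b * D
       = (real_of_int a * real_of_int d - real_of_int b * real_of_int c) * x"
      by (simp add: D_def algebra_simps)
    finally show ?thesis using dr by simp
  qed
  have m: "of_int (-c) * y + of_int a = 1 / D"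
  proof -
    have "of_int (-c) * y + of_int a = (- of_int c * (of_int a * x + of_int b) + of_int a * D) / D"
      by (simp only: yD) (simp add: Dnz field_simps)
    also have "- of_int c * (of_int a * x + of_int b) + of_int a * D
       = (real_of_int a * real_of_int d - real_of_int b * real_of_int c)"
      by (simp add: D_def algebra_simps)
    finally show ?thesis using dr by simp
  qed
  have "x = (of_int d * y + of_int (-b)) / (of_int (-c) * y + of_int a)"
    using n m Dnz by simp
  moreover have "d*a - (-b)*(-c) = 1" using 1 by (simp add: algebra_simps)
  ultimately show ?thesis unfolding psl2z_equiv_def by blast
qed

lemma psl_neg: "psl2z_equiv x y \<Longrightarrow> psl2z_equiv (-x) (-y)"
proof -
  assume "psl2z_equiv x y"
  then obtain a b c d :: int where 1: "a*d - b*c = 1" "y = (of_int a * x + of_int b)/(of_int c * x + of_int d)"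
    by (auto simp: psl2z_equiv_def)
  have "-y = (of_int a * (-x) + of_int (-b))/(of_int (-c) * (-x) + of_int d)"
    using 1 by (simp add: minus_divide_left)
  moreover have "a*d - (-b)*(-c) = 1" using 1 by simp
  ultimately show ?thesis unfolding psl2z_equiv_def by blast
qed

lemma lehner_irr: "1 < w \<Longrightarrow> w < 2 \<Longrightarrow> w \<notin> \<rat> \<Longrightarrow> 1 < lehner w \<and> lehner w < 2 \<and> lehner w \<notin> \<rat>"
proof -
  assume w: "1 < w" "w < 2" "w \<notin> \<rat>"
  have ne: "w \<noteq> 3/2" using w(3) by (metis Rats_divide Rats_number_of)
  show ?thesis
  proof (cases "w < 3/2")
    case True
    have "2 - w \<notin> \<rat>" using irr_add_int[OF irr_neg[OF w(3)], of 2] by simp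
    then show ?thesis using True w irr_inv by (auto simp: lehner_def field_simps)
  next
    case False
    have "w - 1 \<notin> \<rat>" using irr_add_int[OF w(3), of "-1"] by simp
    then show ?thesis using False ne w irr_inv by (auto simp: lehner_def field_simps)
  qed
qed

lemma lehner_pow_irr: "1 < w \<Longrightarrow> w < 2 \<Longrightarrow> w \<notin> \<rat> \<Longrightarrow>
   1 < (lehner^^n) w \<and> (lehner^^n) w < 2 \<and> (lehner^^n) w \<notin> \<rat>"
  by (induction n) (auto dest: lehner_irr)

lemma sg_one': "sg z (Suc 0) = (if z < 3/2 then 1 else -1)"
  using sg_one by simp

lemma psl_step: "1 < v \<Longrightarrow> v < 2 \<Longrightarrow> psl2z_equiv v (sg v 1 * lehner v)"
proof (cases "v < 3/2")
  case True
  assume v: "1 < v" "v < 2"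
  have "sg v 1 * lehner v = (of_int 0 * v + of_int 1)/(of_int (-1) * v + of_int 2)"
    using True by (simp add: sg_one' lehner_def)
  then show ?thesis unfolding psl2z_equiv_def by (intro exI[of _ 0] exI[of _ 1] exI[of _ "-1"] exI[of _ 2]) simp
next
  case False
  assume v: "1 < v" "v < 2"
  have "sg v 1 * lehner v = (of_int 0 * v + of_int (-1))/(of_int 1 * v + of_int (-1))"
    using False by (simp add: sg_one' lehner_def)
  then show ?thesis unfolding psl2z_equiv_def by (intro exI[of _ 0] exI[of _ "-1"] exI[of _ 1] exI[of _ "-1"]) simp
qed

lemma sg_pm: "sg z n = 1 \<or> sg z n = -1"
proof (induction n)
  case 0 then show ?case by (simp add: sg_def)
next
  case (Suc n)
  have "sg z (Suc n) = sg z n * sg ((lehner^^n) z) 1" using sg_add[of z n 1] by simp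
  then show ?case using Suc sg_one[of "(lehner^^n) z"] by (auto split: if_splits)
qed

lemma psl_tail_gen:
  assumes w: "1 < w" "w < 2" "w \<notin> \<rat>"
  shows "psl2z_equiv w (sg w n * (lehner^^n) w)"
proof (induction n)
  case 0
  show ?case unfolding psl2z_equiv_def
    by (intro exI[of _ 1] exI[of _ 0] exI[of _ 0] exI[of _ 1]) (simp add: sg_def)
next
  case (Suc n)
  define v where "v = (lehner^^n) w"
  have v: "1 < v" "v < 2" "v \<notin> \<rat>" using lehner_pow_irr[OF w] v_def by auto
  have e: "sg w (Suc n) * (lehner^^Suc n) w = sg w n * (sg v 1 * lehner v)"
    using sg_add[of w n 1] by (simp add: v_def)
  have st: "psl2z_equiv v (sg v 1 * lehner v)" using psl_step v by blast
  show ?case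
  proof (cases "sg w n = 1")
    case True
    have e2: "sg w (Suc n) * (lehner^^Suc n) w = sg v 1 * lehner v" using e True by simp
    have "psl2z_equiv w v" using Suc True by (simp add: v_def)
    then show ?thesis unfolding e2 using psl_trans[OF w(3)] st by blast
  next
    case False
    then have m: "sg w n = -1" using sg_pm by blast
    have "psl2z_equiv (-v) (-(sg v 1 * lehner v))" using psl_neg st by blast
    moreover have e2: "sg w (Suc n) * (lehner^^Suc n) w = -(sg v 1 * lehner v)" using e m by simp
    moreover have "psl2z_equiv w (-v)" using Suc m by (simp add: v_def)
    ultimately show ?thesis using psl_trans[OF w(3)] by metis
  qed
qed

lemma tail_formula:
  assumes "1 \<le> \<alpha>" "\<alpha> \<le> 2"
  shows "lehner_tail m \<alpha> = sg \<alpha> (Suc m) * (lehner^^Suc m) \<alpha>"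
proof -
  have p: "(\<Prod>i\<le>m. - of_int (snd (lehner_digit \<alpha> i))) = sg \<alpha> (Suc m)"
    by (simp add: sg_def lessThan_Suc_atMost)
  have f: "(\<lambda>k. lehner_digit \<alpha> (m + 1 + k)) = lehner_digit ((lehner^^Suc m) \<alpha>)"
  proof (rule ext)
    fix k
    have "m + 1 + k = k + Suc m" by simp
    then show "lehner_digit \<alpha> (m + 1 + k) = lehner_digit ((lehner^^Suc m) \<alpha>) k"
      by (simp only: digit_shift)
  qed
  have r: "1 \<le> (lehner^^Suc m) \<alpha>" "(lehner^^Suc m) \<alpha> \<le> 2" using lehner_pow_range[OF assms, of "Suc m"] by blast+
  show ?thesis unfolding lehner_tail_def p f cf_val_lehner[OF r] ..
qed


theorem proposition6p3:
  fixes \<alpha> \<beta> :: real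
  assumes "1 < \<alpha>" "\<alpha> < 2" "\<alpha> \<notin> \<rat>"
      and "1 < \<beta>" "\<beta> < 2" "\<beta> \<notin> \<rat>"
  shows "(psl2z_equiv \<alpha> \<beta> \<longleftrightarrow>
            (\<exists>r s :: nat. 0 < r \<and> 0 < s \<and> lehner_tail r \<alpha> = lehner_tail s \<beta>))
         \<and> (\<forall>m. psl2z_equiv \<alpha> (lehner_tail m \<alpha>))"
proof -
  have tailA: "psl2z_equiv \<alpha> (lehner_tail m \<alpha>)" for m
    using psl_tail_gen[OF assms(1-3), of "Suc m"] tail_formula[of \<alpha> m] assms by simp
  have tailB: "psl2z_equiv \<beta> (lehner_tail m \<beta>)" for m
    using psl_tail_gen[OF assms(4-6), of "Suc m"] tail_formula[of \<beta> m] assms by simp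
  have fwd: "\<exists>r s :: nat. 0 < r \<and> 0 < s \<and> lehner_tail r \<alpha> = lehner_tail s \<beta>"
    if eq: "psl2z_equiv \<alpha> \<beta>"
  proof -
    obtain a b c d :: int where 1: "a*d - b*c = 1" "\<beta> = (of_int a * \<alpha> + of_int b)/(of_int c * \<alpha> + of_int d)"
      using eq by (auto simp: psl2z_equiv_def)
    have "Rel \<alpha> \<beta>" using Rel_mat[OF refl 1(1) assms(3)] 1(2) by simp
    moreover have "NN \<alpha> = \<alpha>" "NN \<beta> = \<beta>" using NN_id assms by auto
    ultimately obtain r s where rs: "(lehner^^r) \<alpha> = (lehner^^s) \<beta>" "sg \<alpha> r = sg \<beta> s"
      unfolding Rel_def by auto
    have L: "(lehner^^(Suc (Suc r))) \<alpha> = (lehner^^(Suc (Suc s))) \<beta>"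
      using rs(1) by (metis funpow_Suc_right comp_apply funpow_swap1)
    have S: "sg \<alpha> (r + 2) = sg \<beta> (s + 2)"
      using sg_add[of \<alpha> r 2] sg_add[of \<beta> s 2] rs by simp
    have "lehner_tail (Suc r) \<alpha> = lehner_tail (Suc s) \<beta>"
      using tail_formula[of \<alpha> "Suc r"] tail_formula[of \<beta> "Suc s"] assms L S
      by (simp del: funpow.simps)
    then show ?thesis by blast
  qed
  have bwd: "psl2z_equiv \<alpha> \<beta>"
    if ex: "\<exists>r s :: nat. 0 < r \<and> 0 < s \<and> lehner_tail r \<alpha> = lehner_tail s \<beta>"
  proof -
    obtain r s where e: "lehner_tail r \<alpha> = lehner_tail s \<beta>" using ex by blast
    have "psl2z_equiv (lehner_tail s \<beta>) \<beta>" using psl_sym[OF assms(6) tailB] .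
    then show ?thesis using psl_trans[OF assms(3) tailA[of r]] e by simp
  qed
  show ?thesis using fwd bwd tailA by blast
qed


end
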